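(* Let $y_0\in E$ and suppose: (A1) $\eta>0$ on $[y_0,\infty)$ and $\eta\in C^2([y_0,\infty))$; (A2) $b^2/\eta$, $\tilde a/\eta$ and $\eta'/\eta$ are bounded on $[y_0,\infty)$; (A3) $\Psi\eta(y)\to1$ as $y\to\infty$. Let $u$ be a solution of $$0=\tfrac12b^2u''+\tilde au'+\eta u-u^2-d\frac{(u')^2}{u}$$ on $[y_0,\infty)$ with $C_1\eta\le u\le C_2\eta$ there, for some constants $0<C_1<C_2$. Then $u(y)/\eta(y)\to1$ as $y\to\infty$.
   Context: $E=(E_-,\infty)$ with $E_-\in\{-\infty\}\cup\mathbb R$. $r,\lambda,\sigma,a,b,\rho,\delta:E\to\mathbb R$ are locally Lipschitz with $\sigma>0$, $b(y)\neq0$, $\rho(y)\in[-1,1]$; $R\in(0,\infty)\setminus\{1\}$. Define $\eta=\frac1R\big(\delta-(1-R)(r+\frac{\lambda^2}{2R})\big)$, $\tilde a=a+\frac{1-R}{R}\rho\lambda b$, $d=\frac12b^2((1-\rho^2)R+\rho^2+1)$, and for positive $g\in C^2$, $\Psi g=1+\frac{\frac12b^2g''+\tilde ag'}{g^2}-d\frac{(g')^2}{g^3}$. A solution on $[y_0,\infty)$ is a positive $C^2$ function satisfying the equation there. *)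

theory Defs
  imports "HOL-Analysis.Analysis"
begin

text \<open>Domain E = (E_-, infinity) with E_- in {-infinity} union reals, encoded by an extended real.\<close>
definition dom_E :: "ereal \<Rightarrow> real set" where
  "dom_E Em = {y. Em < ereal y}"

definition loc_lipschitz_on :: "real set \<Rightarrow> (real \<Rightarrow> real) \<Rightarrow> bool" where
  "loc_lipschitz_on S f \<longleftrightarrow>
     (\<forall>x\<in>S. \<exists>e>0. \<exists>L. L-lipschitz_on (cball x e \<inter> S) f)"

definition eta_fun :: "real \<Rightarrow> (real \<Rightarrow> real) \<Rightarrow> (real \<Rightarrow> real) \<Rightarrow> (real \<Rightarrow> real) \<Rightarrow> real \<Rightarrow> real" where
  "eta_fun R r lam delta y = (delta y - (1 - R) * (r y + (lam y)\<^sup>2 / (2 * R))) / R"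

definition atil_fun :: "real \<Rightarrow> (real \<Rightarrow> real) \<Rightarrow> (real \<Rightarrow> real) \<Rightarrow> (real \<Rightarrow> real) \<Rightarrow> (real \<Rightarrow> real) \<Rightarrow> real \<Rightarrow> real" where
  "atil_fun R a rho lam b y = a y + (1 - R) / R * rho y * lam y * b y"

definition d_fun :: "real \<Rightarrow> (real \<Rightarrow> real) \<Rightarrow> (real \<Rightarrow> real) \<Rightarrow> real \<Rightarrow> real" where
  "d_fun R b rho y = 1/2 * (b y)\<^sup>2 * ((1 - (rho y)\<^sup>2) * R + (rho y)\<^sup>2 + 1)"

definition C2_with :: "real set \<Rightarrow> (real \<Rightarrow> real) \<Rightarrow> (real \<Rightarrow> real) \<Rightarrow> (real \<Rightarrow> real) \<Rightarrow> bool" where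
  "C2_with S g g1 g2 \<longleftrightarrow>
     (\<forall>y\<in>S. (g has_real_derivative g1 y) (at y within S) \<and>
             (g1 has_real_derivative g2 y) (at y within S)) \<and> continuous_on S g2"

definition Psi :: "(real \<Rightarrow> real) \<Rightarrow> (real \<Rightarrow> real) \<Rightarrow> (real \<Rightarrow> real) \<Rightarrow> (real \<Rightarrow> real) \<Rightarrow> (real \<Rightarrow> real) \<Rightarrow> (real \<Rightarrow> real) \<Rightarrow> real \<Rightarrow> real" where
  "Psi b at2 d g g1 g2 y =
     1 + (1/2 * (b y)\<^sup>2 * g2 y + at2 y * g1 y) / (g y)\<^sup>2 - d y * (g1 y)\<^sup>2 / (g y) ^ 3"

end

theory Submission
  imports Defs
begin


lemma cont_pos_nbhd:
  fixes \<phi> :: "real \<Rightarrow> real"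
  assumes "isCont \<phi> r" "\<phi> r > 0"
  shows "\<exists>d>0. \<forall>y. \<bar>y - r\<bar> < d \<longrightarrow> \<phi> y > 0"
proof -
  from assms(1) have "\<phi> \<midarrow>r\<rightarrow> \<phi> r" by (simp add: isCont_def)
  then obtain s where s: "s > 0" "\<And>x. x \<noteq> r \<Longrightarrow> norm (x - r) < s \<Longrightarrow> norm (\<phi> x - \<phi> r) < \<phi> r"
    using assms(2) unfolding LIM_eq by blast
  show ?thesis
  proof (intro exI[of _ s] conjI allI impI)
    fix y assume "\<bar>y - r\<bar> < s"
    then show "\<phi> y > 0" using s(2)[of y] assms(2) by (cases "y = r") auto
  qed (use s in auto)
qed

lemma crossing:
  fixes \<phi> :: "real \<Rightarrow> real"
  assumes as: "a \<le> s" and cont: "\<forall>y. a \<le> y \<and> y \<le> s \<longrightarrow> isCont \<phi> y"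
    and pa: "\<phi> a \<le> 0" and ps: "\<phi> s > 0"
  shows "\<exists>p. a \<le> p \<and> p < s \<and> \<phi> p = 0 \<and> (\<forall>y. a \<le> y \<and> y \<le> p \<longrightarrow> \<phi> y \<le> 0)
      \<and> (\<forall>d>0. \<exists>y. p < y \<and> y < p + d \<and> \<phi> y > 0)"
proof -
  define S where "S = {y. a \<le> y \<and> y \<le> s \<and> \<phi> y > 0}"
  define p where "p = Inf S"
  have sS: "s \<in> S" using as ps by (auto simp: S_def)
  have bdd: "bdd_below S" by (auto simp: S_def bdd_below_def)
  have lo: "\<And>y. y \<in> S \<Longrightarrow> p \<le> y" using bdd by (simp add: p_def cInf_lower)
  have ap: "a \<le> p" unfolding p_def using sS by (intro cInf_greatest) (auto simp: S_def)
  have ps': "p \<le> s" using lo sS by auto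
  have below: "\<phi> y \<le> 0" if "a \<le> y" "y < p" for y
  proof (rule ccontr)
    assume "\<not> \<phi> y \<le> 0"
    then have "y \<in> S" using that ps' by (auto simp: S_def)
    then show False using lo that by force
  qed
  have nbhd: "\<forall>d>0. \<exists>y. p < y \<and> y < p + d \<and> \<phi> y > 0" if "\<phi> p \<le> 0"
  proof (intro allI impI)
    fix d :: real assume d: "d > 0"
    show "\<exists>y. p < y \<and> y < p + d \<and> \<phi> y > 0"
    proof (rule ccontr)
      assume nn: "\<not> ?thesis"
      have "\<forall>y\<in>S. p + d \<le> y"
      proof
        fix y assume yS: "y \<in> S"
        have "p \<le> y" using lo yS .
        moreover have "y \<noteq> p" using yS that by (auto simp: S_def)
        ultimately show "p + d \<le> y" using nn yS by (force simp: S_def)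
      qed
      then have "p + d \<le> p" unfolding p_def using sS by (intro cInf_greatest) auto
      then show False using d by simp
    qed
  qed
  have pnp: "\<phi> p \<le> 0"
  proof (rule ccontr)
    assume "\<not> \<phi> p \<le> 0"
    then have pos: "\<phi> p > 0" by simp
    obtain d where d: "d > 0" "\<forall>y. \<bar>y - p\<bar> < d \<longrightarrow> \<phi> y > 0"
      using cont_pos_nbhd[where \<phi>=\<phi> and r=p] pos cont ap ps' by blast
    show False
    proof (cases "p = a")
      case True then show ?thesis using pa pos by simp
    next
      case False
      define y where "y = max a (p - d/2)"
      have "a \<le> y" "y < p" "\<bar>y - p\<bar> < d" using False ap d(1) by (auto simp: y_def)
      then show False using below[of y] d(2) by fastforce
    qed
  qed
  have p0: "\<phi> p = 0"
  proof (rule ccontr)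
    assume "\<phi> p \<noteq> 0"
    then have neg: "- \<phi> p > 0" using pnp by simp
    have "isCont (\<lambda>y. - \<phi> y) p" using cont ap ps' by auto
    then obtain d where d: "d > 0" "\<forall>y. \<bar>y - p\<bar> < d \<longrightarrow> - \<phi> y > 0"
      using cont_pos_nbhd[where \<phi>="\<lambda>y. - \<phi> y" and r=p] neg by blast
    obtain y where "p < y" "y < p + d" "\<phi> y > 0" using nbhd[OF pnp] d(1) by blast
    then show False using d(2)[rule_format, of y] by simp
  qed
  have "p \<noteq> s" using p0 ps by auto
  then show ?thesis using ap ps' p0 below nbhd[OF pnp] pnp
    by (intro exI[of _ p]) (auto simp: le_less)
qed

lemma barrier:
  fixes f g :: "real \<Rightarrow> real"
  assumes dpos: "\<delta> > 0" and c0: "c0 \<le> \<kappa>"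
    and der: "\<forall>x\<ge>x0. (f has_real_derivative g x) (at x)"
    and start: "f x0 \<ge> c0"
    and key: "\<forall>x\<ge>x0. (\<forall>y. x0 \<le> y \<and> y \<le> x \<longrightarrow> f y \<ge> min \<kappa> (c0 + \<delta>/2*(y-x0)))
                 \<longrightarrow> f x = min \<kappa> (c0 + \<delta>/2*(x-x0)) \<longrightarrow> g x \<ge> \<delta>"
  shows "\<forall>x\<ge>x0. f x \<ge> min \<kappa> (c0 + \<delta>/2*(x-x0))"
proof (rule ccontr)
  define m where "m = (\<lambda>y. min \<kappa> (c0 + \<delta>/2*(y-x0)))"
  assume "\<not> ?thesis"
  then obtain s where s: "s \<ge> x0" "f s < m s" by (auto simp: m_def not_le)
  have mc: "isCont m y" for y unfolding m_def by (intro continuous_intros)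
  have fc: "isCont f y" if "y \<ge> x0" for y using der that DERIV_isCont by blast
  obtain p where p: "x0 \<le> p" "p < s" "m p - f p = 0"
     "\<forall>y. x0 \<le> y \<and> y \<le> p \<longrightarrow> m y - f y \<le> 0"
     "\<forall>d>0. \<exists>y. p < y \<and> y < p + d \<and> m y - f y > 0"
    using crossing[where \<phi>="\<lambda>y. m y - f y" and a=x0 and s=s] s mc fc start c0
    by (auto simp: m_def intro!: continuous_intros)
  have "g p \<ge> \<delta>" using key[rule_format, of p] p unfolding m_def by auto
  moreover have "((\<lambda>y. f y - \<delta>/2*y) has_real_derivative g p - \<delta>/2) (at p)"
    using der p(1) by (auto intro!: derivative_eq_intros)
  ultimately obtain d where d: "d > 0" "\<forall>h>0. h < d \<longrightarrow> f p - \<delta>/2*p < f (p+h) - \<delta>/2*(p+h)"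
    using DERIV_pos_inc_right[where f="\<lambda>y. f y - \<delta>/2*y" and x=p and l="g p - \<delta>/2"] dpos by auto
  obtain y where y: "p < y" "y < p + d" "m y - f y > 0" using p(5) d(1) by blast
  have "f p - \<delta>/2*p < f y - \<delta>/2*y" using d(2)[rule_format, of "y - p"] y by auto
  moreover have "m y \<le> m p + \<delta>/2*(y-p)"
  proof -
    have "\<delta>*p \<le> \<delta>*y" using y(1) dpos by simp
    then show ?thesis unfolding m_def by (simp add: min_def algebra_simps) argo
  qed
  ultimately show False using p(3) y(3) by (simp add: right_diff_distrib)
qed

lemma growth_ge:
  fixes v dv :: "real \<Rightarrow> real"
  assumes "a \<le> b" "\<forall>x. a \<le> x \<and> x \<le> b \<longrightarrow> (v has_real_derivative dv x) (at x) \<and> dv x \<ge> c"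
  shows "v b \<ge> v a + c * (b - a)"
proof -
  have "(\<lambda>x. v x - c*x) a \<le> (\<lambda>x. v x - c*x) b"
  proof (rule DERIV_nonneg_imp_nondecreasing[OF assms(1)])
    fix x assume "a \<le> x" "x \<le> b"
    then have "((\<lambda>x. v x - c*x) has_real_derivative dv x - c) (at x)" "dv x - c \<ge> 0"
      using assms(2) by (auto intro!: derivative_eq_intros)
    then show "\<exists>y. ((\<lambda>x. v x - c*x) has_real_derivative y) (at x) \<and> 0 \<le> y" by blast
  qed
  then show ?thesis by (simp add: algebra_simps)
qed

lemma growth_le:
  fixes v dv :: "real \<Rightarrow> real"
  assumes "a \<le> b" "\<forall>x. a \<le> x \<and> x \<le> b \<longrightarrow> (v has_real_derivative dv x) (at x) \<and> dv x \<le> c"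
  shows "v b \<le> v a + c * (b - a)"
proof -
  have "(\<lambda>x. - v x) b \<ge> (\<lambda>x. - v x) a + (-c) * (b - a)"
    using assms by (intro growth_ge[where dv="\<lambda>x. - dv x"]) (auto intro!: derivative_eq_intros)
  then show ?thesis by simp
qed

lemma core:
  fixes v dv ddv :: "real \<Rightarrow> real"
  assumes kp: "\<kappa> > 0" and dp: "\<delta> > 0"
    and bnd: "\<forall>x\<ge>T. lo \<le> v x \<and> v x \<le> hi"
    and d1: "\<forall>x\<ge>T. (v has_real_derivative dv x) (at x)"
    and d2: "\<forall>x\<ge>T. (dv has_real_derivative ddv x) (at x)"
    and key: "\<forall>x\<ge>T. v x \<ge> \<theta> \<longrightarrow> \<bar>dv x\<bar> \<le> \<kappa> \<longrightarrow> ddv x \<ge> \<delta>"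
  shows "\<exists>x0. \<forall>x\<ge>x0. v x < \<theta>"
proof (cases "\<exists>t\<ge>T. v t \<ge> \<theta> \<and> dv t \<ge> 0")
  case True
  then obtain t where t: "t \<ge> T" "v t \<ge> \<theta>" "dv t \<ge> 0" by blast
  have B: "\<forall>x\<ge>t. dv x \<ge> min \<kappa> (0 + \<delta>/2*(x-t))"
  proof (rule barrier[where g=ddv])
    show "\<forall>x\<ge>t. (dv has_real_derivative ddv x) (at x)" using d2 t by auto
    show "\<forall>x\<ge>t. (\<forall>y. t \<le> y \<and> y \<le> x \<longrightarrow> min \<kappa> (0 + \<delta>/2*(y-t)) \<le> dv y) \<longrightarrow>
          dv x = min \<kappa> (0 + \<delta>/2*(x-t)) \<longrightarrow> \<delta> \<le> ddv x"
    proof (intro allI impI)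
      fix x assume x: "x \<ge> t" and h: "\<forall>y. t \<le> y \<and> y \<le> x \<longrightarrow> min \<kappa> (0 + \<delta>/2*(y-t)) \<le> dv y"
        and e: "dv x = min \<kappa> (0 + \<delta>/2*(x-t))"
      have "v t \<le> v x"
      proof (rule DERIV_nonneg_imp_nondecreasing[OF x])
        fix z assume z: "t \<le> z" "z \<le> x"
        have "0 \<le> min \<kappa> (0 + \<delta>/2*(z-t))" using kp dp z by auto
        then show "\<exists>y. (v has_real_derivative y) (at z) \<and> 0 \<le> y"
          using h z d1 t by (intro exI[of _ "dv z"]) force
      qed
      moreover have "\<bar>dv x\<bar> \<le> \<kappa>" using e kp dp x by auto
      ultimately show "\<delta> \<le> ddv x" using key t x by force
    qed
  qed (use dp kp t in auto)
  define t1 where "t1 = t + 2*\<kappa>/\<delta>"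
  have t1: "\<forall>x\<ge>t1. dv x \<ge> \<kappa>"
  proof (intro allI impI)
    fix x assume "x \<ge> t1"
    then have "\<delta>/2*(x-t) \<ge> \<delta>/2*(2*\<kappa>/\<delta>)" using dp unfolding t1_def by (intro mult_left_mono) auto
    also have "\<delta>/2*(2*\<kappa>/\<delta>) = \<kappa>" using dp by simp
    finally have "\<kappa> \<le> \<delta>/2*(x-t)" .
    moreover have "x \<ge> t" using \<open>x \<ge> t1\<close> kp dp unfolding t1_def by (smt (verit) divide_pos_pos)
    ultimately show "dv x \<ge> \<kappa>" using B[rule_format, of x] by simp
  qed
  have tt1: "t1 \<ge> T" using t kp dp unfolding t1_def by (smt (verit) divide_pos_pos)
  define L where "L = (hi - lo)/\<kappa> + 1"
  have L: "L \<ge> 0" "\<kappa> * L = hi - lo + \<kappa>" using kp bnd tt1 unfolding L_def by (auto simp: field_simps)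
  have "v (t1 + L) \<ge> v t1 + \<kappa> * ((t1 + L) - t1)"
    using L t1 d1 tt1 by (intro growth_ge[where dv=dv]) auto
  then have "v (t1 + L) > hi" using L bnd tt1 kp by force
  moreover have "v (t1 + L) \<le> hi" using bnd tt1 L by simp
  ultimately show ?thesis by simp
next
  case False
  then have nA: "\<forall>t\<ge>T. v t \<ge> \<theta> \<longrightarrow> dv t < 0" by force
  show ?thesis
  proof (cases "\<exists>x0\<ge>T. v x0 < \<theta>")
    case True
    then obtain x0 where x0: "x0 \<ge> T" "v x0 < \<theta>" by blast
    have le: "\<forall>x\<ge>x0. v x \<le> \<theta>"
    proof (rule ccontr)
      assume "\<not> ?thesis"
      then obtain x1 where x1: "x1 \<ge> x0" "v x1 > \<theta>" by force
      have vc: "isCont v y" if "y \<ge> T" for y using d1 that DERIV_isCont by blast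
      obtain p where p: "x0 \<le> p" "p < x1" "v p - \<theta> = 0" "\<forall>y. x0 \<le> y \<and> y \<le> p \<longrightarrow> v y - \<theta> \<le> 0"
        using crossing[where \<phi>="\<lambda>y. v y - \<theta>" and a=x0 and s=x1] x0 x1 vc
        by (auto intro!: continuous_intros)
      have "p \<noteq> x0" using p(3) x0 by auto
      then have px: "p > x0" using p(1) by auto
      have "dv p < 0" using nA p x0 by auto
      then obtain d where d: "d > 0" "\<forall>h>0. h < d \<longrightarrow> v p < v (p - h)"
        using DERIV_neg_dec_left[where f=v and x=p and l="dv p"] d1 p x0 by auto
      define h where "h = min (d/2) ((p-x0)/2)"
      have "h > 0" "h < d" "x0 \<le> p - h" "p - h \<le> p" using d px by (auto simp: h_def min_def field_simps)
      then show False using d(2) p(3,4) by force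
    qed
    have "\<forall>x\<ge>x0. v x < \<theta>"
    proof (intro allI impI)
      fix x assume x: "x \<ge> x0"
      show "v x < \<theta>"
      proof (rule ccontr)
        assume "\<not> v x < \<theta>"
        then have vx: "v x = \<theta>" using le x by force
        then have xx: "x > x0" using x x0 by (cases "x = x0") auto
        have "dv x < 0" using nA x x0 vx by auto
        then obtain d where d: "d > 0" "\<forall>h>0. h < d \<longrightarrow> v x < v (x - h)"
          using DERIV_neg_dec_left[where f=v and x=x and l="dv x"] d1 x x0 by auto
        define h where "h = min (d/2) ((x-x0)/2)"
        have "h > 0" "h < d" "x0 \<le> x - h" using d xx by (auto simp: h_def min_def field_simps)
        then show False using d(2) le vx by force
      qed
    qed
    then show ?thesis by blast
  next
    case False
    then have ge: "\<forall>x\<ge>T. v x \<ge> \<theta>" by force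
    then have neg: "\<forall>x\<ge>T. dv x < 0" using nA by blast
    have "\<exists>x0\<ge>T. dv x0 \<ge> -\<kappa>"
    proof (rule ccontr)
      assume "\<not> ?thesis"
      then have lt: "\<forall>x\<ge>T. dv x \<le> -\<kappa>" by force
      define L where "L = (hi - lo)/\<kappa> + 1"
      have L: "L \<ge> 0" "\<kappa> * L = hi - lo + \<kappa>" using kp bnd unfolding L_def by (auto simp: field_simps)
      have "v (T + L) \<le> v T + (-\<kappa>) * ((T + L) - T)"
        using L lt d1 by (intro growth_le[where dv=dv]) auto
      then have "v (T + L) < lo" using L bnd kp by force
      then show False using bnd L by (smt (verit))
    qed
    then obtain x0 where x0: "x0 \<ge> T" "dv x0 \<ge> -\<kappa>" by blast
    have B: "\<forall>x\<ge>x0. dv x \<ge> min \<kappa> (-\<kappa> + \<delta>/2*(x-x0))"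
    proof (rule barrier[where g=ddv])
      show "\<forall>x\<ge>x0. (dv has_real_derivative ddv x) (at x)" using d2 x0 by auto
      show "\<forall>x\<ge>x0. (\<forall>y. x0 \<le> y \<and> y \<le> x \<longrightarrow> min \<kappa> (-\<kappa> + \<delta>/2*(y-x0)) \<le> dv y) \<longrightarrow>
            dv x = min \<kappa> (-\<kappa> + \<delta>/2*(x-x0)) \<longrightarrow> \<delta> \<le> ddv x"
      proof (intro allI impI)
        fix x assume x: "x \<ge> x0" and e: "dv x = min \<kappa> (-\<kappa> + \<delta>/2*(x-x0))"
        have "\<delta>*(x-x0) \<ge> 0" using dp x by simp
        then have "\<bar>dv x\<bar> \<le> \<kappa>" using e kp by (auto simp: min_def abs_if)
        then show "\<delta> \<le> ddv x" using key ge x0 x by force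
      qed
    qed (use dp kp x0 in auto)
    define x3 where "x3 = x0 + 4*\<kappa>/\<delta>"
    have "\<delta>/2*(x3-x0) = 2*\<kappa>" using dp unfolding x3_def by simp
    moreover have "x3 \<ge> x0" using kp dp unfolding x3_def by (smt (verit) divide_pos_pos)
    ultimately have "dv x3 \<ge> \<kappa>" using B[rule_format, of x3] kp by simp
    moreover have "x3 \<ge> T" using x0 kp dp unfolding x3_def by (smt (verit) divide_pos_pos)
    ultimately show ?thesis using neg kp by force
  qed
qed


lemma alg:
  fixes e e1 e2 u u1 u2 b ta dd w w1 w2 Ps :: real
  assumes ep: "e > 0" and up: "u > 0"
    and wd: "w = u/e" and w1d: "w1 = (u1*e - u*e1)/e^2" and w2d: "w2 = (u2 - e2*w - 2*e1*w1)/e"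
    and eq: "0 = 1/2*b^2*u2 + ta*u1 + e*u - u^2 - dd*u1^2/u"
    and Psd: "Ps = 1 + (1/2*b^2*e2 + ta*e1)/e^2 - dd*e1^2/e^3"
  shows "b^2/(2*e)*w2 = w*(w - Ps) - (b^2/e*(e1/e) + ta/e - 2*(dd/e)*(e1/e))*w1 + (dd/e)*w1^2/w"
proof -
  have wp: "w > 0" using ep up wd by simp
  have uu: "u = e*w" using wd ep by simp
  have "e*(e1*w + e*w1) = e*u1" using w1d ep uu by (simp add: field_simps power2_eq_square)
  then have uu1: "u1 = e1*w + e*w1" using ep by simp
  have uu2: "u2 = e*w2 + e2*w + 2*e1*w1" using w2d ep by (simp add: field_simps)
  have eq2: "0 = 1/2*b^2*(e*w2 + e2*w + 2*e1*w1) + ta*(e1*w + e*w1) + e*(e*w) - (e*w)^2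
      - dd*(e1*w + e*w1)^2/(e*w)" using eq uu uu1 uu2 by simp
  have "b^2/(2*e)*w2 - (w*(w - Ps) - (b^2/e*(e1/e) + ta/e - 2*(dd/e)*(e1/e))*w1 + (dd/e)*w1^2/w)
     = (1/2*b^2*(e*w2 + e2*w + 2*e1*w1) + ta*(e1*w + e*w1) + e*(e*w) - (e*w)^2
      - dd*(e1*w + e*w1)^2/(e*w)) / e^2"
    unfolding Psd using ep wp by (simp add: field_simps power2_eq_square power3_eq_cube)
  then show ?thesis using eq2 by simp
qed


lemma within_to_at:
  assumes "(f has_real_derivative D) (at y within {y0..})" "y0 < y"
  shows "(f has_real_derivative D) (at y)"
proof -
  have sub: "{y0<..} \<subseteq> {y0..}" by auto
  have "(f has_real_derivative D) (at y within {y0<..})"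
    by (rule has_field_derivative_subset[OF assms(1) sub])
  moreover have "at y within {y0<..} = at y"
    by (rule at_within_open) (use assms(2) in auto)
  ultimately show ?thesis by simp
qed

theorem theorem4p10:
  fixes Em :: ereal
    and r lam sigma a b rho delta :: "real \<Rightarrow> real"
    and R y0 C1 C2 :: real
    and eta1 eta2 u u1 u2 :: "real \<Rightarrow> real"
  assumes Em: "Em \<noteq> \<infinity>"
    and lip: "loc_lipschitz_on (dom_E Em) r" "loc_lipschitz_on (dom_E Em) lam"
      "loc_lipschitz_on (dom_E Em) sigma" "loc_lipschitz_on (dom_E Em) a"
      "loc_lipschitz_on (dom_E Em) b" "loc_lipschitz_on (dom_E Em) rho"
      "loc_lipschitz_on (dom_E Em) delta"
    and sigma_pos: "\<forall>y\<in>dom_E Em. sigma y > 0"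
    and b_nz: "\<forall>y\<in>dom_E Em. b y \<noteq> 0"
    and rho_bd: "\<forall>y\<in>dom_E Em. -1 \<le> rho y \<and> rho y \<le> 1"
    and R: "R > 0" "R \<noteq> 1"
    and y0: "y0 \<in> dom_E Em"
    and A1_pos: "\<forall>y\<ge>y0. eta_fun R r lam delta y > 0"
    and A1_C2: "C2_with {y0..} (eta_fun R r lam delta) eta1 eta2"
    and A2: "bounded ((\<lambda>y. (b y)\<^sup>2 / eta_fun R r lam delta y) ` {y0..})"
      "bounded ((\<lambda>y. atil_fun R a rho lam b y / eta_fun R r lam delta y) ` {y0..})"
      "bounded ((\<lambda>y. eta1 y / eta_fun R r lam delta y) ` {y0..})"
    and A3: "((\<lambda>y. Psi b (atil_fun R a rho lam b) (d_fun R b rho)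
                  (eta_fun R r lam delta) eta1 eta2 y) \<longlongrightarrow> 1) at_top"
    and u_pos: "\<forall>y\<ge>y0. u y > 0"
    and u_C2: "C2_with {y0..} u u1 u2"
    and u_eq: "\<forall>y\<ge>y0. 0 = 1/2 * (b y)\<^sup>2 * u2 y + atil_fun R a rho lam b y * u1 y
                 + eta_fun R r lam delta y * u y - (u y)\<^sup>2
                 - d_fun R b rho y * (u1 y)\<^sup>2 / u y"
    and C: "0 < C1" "C1 < C2"
    and u_bounds: "\<forall>y\<ge>y0. C1 * eta_fun R r lam delta y \<le> u y \<and> u y \<le> C2 * eta_fun R r lam delta y"
  shows "((\<lambda>y. u y / eta_fun R r lam delta y) \<longlongrightarrow> 1) at_top"
proof -
  define e where "e = eta_fun R r lam delta"
  define ta where "ta = atil_fun R a rho lam b"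
  define dd where "dd = d_fun R b rho"
  define Ps where "Ps = (\<lambda>y. Psi b ta dd e eta1 eta2 y)"
  define w where "w = (\<lambda>y. u y / e y)"
  define w1 where "w1 = (\<lambda>y. (u1 y * e y - u y * eta1 y) / (e y)^2)"
  define w2 where "w2 = (\<lambda>y. (u2 y - eta2 y * w y - 2 * eta1 y * w1 y) / e y)"
  have epos: "\<And>y. y \<ge> y0 \<Longrightarrow> e y > 0" using A1_pos by (simp add: e_def)
  have upos: "\<And>y. y \<ge> y0 \<Longrightarrow> u y > 0" using u_pos by simp
  have indom: "\<And>y. y \<ge> y0 \<Longrightarrow> y \<in> dom_E Em"
    using y0 unfolding dom_E_def by (auto intro: less_le_trans)
  have bnz: "\<And>y. y \<ge> y0 \<Longrightarrow> b y \<noteq> 0" using b_nz indom by blast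
  have rho1: "\<And>y. y \<ge> y0 \<Longrightarrow> (rho y)^2 \<le> 1"
  proof -
    fix y assume "y \<ge> y0"
    then have "\<bar>rho y\<bar> \<le> 1" using rho_bd indom by (auto simp: abs_le_iff)
    then have "\<bar>rho y\<bar>^2 \<le> 1^2" by (intro power_mono) auto
    then show "(rho y)^2 \<le> 1" by simp
  qed
  have du: "(u has_real_derivative u1 y) (at y)" and du1: "(u1 has_real_derivative u2 y) (at y)"
    if y: "y > y0" for y
  proof -
    have "y \<in> {y0..}" using y by simp
    then have "(u has_real_derivative u1 y) (at y within {y0..})" "(u1 has_real_derivative u2 y) (at y within {y0..})"
      using u_C2 unfolding C2_with_def by blast+
    then show "(u has_real_derivative u1 y) (at y)" "(u1 has_real_derivative u2 y) (at y)"
      using y within_to_at by blast+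
  qed
  have de: "(e has_real_derivative eta1 y) (at y)" and de1: "(eta1 has_real_derivative eta2 y) (at y)"
    if y: "y > y0" for y
  proof -
    have "y \<in> {y0..}" using y by simp
    then have "(e has_real_derivative eta1 y) (at y within {y0..})" "(eta1 has_real_derivative eta2 y) (at y within {y0..})"
      using A1_C2 unfolding C2_with_def e_def by blast+
    then show "(e has_real_derivative eta1 y) (at y)" "(eta1 has_real_derivative eta2 y) (at y)"
      using y within_to_at by blast+
  qed
  have dw: "(w has_real_derivative w1 y) (at y)" if y: "y > y0" for y
  proof -
    have ne: "e y \<noteq> 0" using epos[of y] y by simp
    have "((\<lambda>y. u y / e y) has_real_derivative (u1 y * e y - u y * eta1 y) / (e y * e y)) (at y)"
      by (rule DERIV_divide[OF du[OF y] de[OF y] ne])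
    then show ?thesis by (simp add: w_def w1_def power2_eq_square)
  qed
  have dw1: "(w1 has_real_derivative w2 y) (at y)" if y: "y > y0" for y
  proof -
    have ne: "e y \<noteq> 0" using epos[of y] y by simp
    have ne2: "e y ^ 2 \<noteq> 0" using ne by simp
    have "((\<lambda>y. (u1 y * e y - u y * eta1 y) / (e y)^2) has_real_derivative w2 y) (at y)"
      apply (rule DERIV_cong[OF DERIV_divide[OF DERIV_diff[OF DERIV_mult[OF du1[OF y] de[OF y]] DERIV_mult[OF du[OF y] de1[OF y]]]
            DERIV_power[OF de[OF y]] ne2]])
      using ne unfolding w2_def w1_def w_def by (simp add: field_simps power2_eq_square)
    then show ?thesis by (simp add: w1_def)
  qed
  have wb: "\<forall>y\<ge>y0. C1 \<le> w y \<and> w y \<le> C2"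
  proof (intro allI impI)
    fix y assume y: "y \<ge> y0"
    have "C1 * e y \<le> u y" "u y \<le> C2 * e y" using u_bounds y by (auto simp: e_def)
    then show "C1 \<le> w y \<and> w y \<le> C2" using epos[OF y] by (simp add: w_def pos_le_divide_eq pos_divide_le_eq)
  qed
  obtain Kb where Kb: "Kb > 0" "\<forall>y\<ge>y0. \<bar>(b y)^2 / e y\<bar> \<le> Kb"
    using A2(1) unfolding bounded_pos e_def by auto
  obtain Ka where Ka: "Ka > 0" "\<forall>y\<ge>y0. \<bar>ta y / e y\<bar> \<le> Ka"
    using A2(2) unfolding bounded_pos e_def ta_def by auto
  obtain Ke where Ke: "Ke > 0" "\<forall>y\<ge>y0. \<bar>eta1 y / e y\<bar> \<le> Ke"
    using A2(3) unfolding bounded_pos e_def by auto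
  define P where "P = (\<lambda>y. (b y)^2 / e y)"
  define Q where "Q = (\<lambda>y. eta1 y / e y)"
  define Aa where "Aa = (\<lambda>y. ta y / e y)"
  define D where "D = (\<lambda>y. dd y / e y)"
  define B where "B = (\<lambda>y. P y * Q y + Aa y - 2 * D y * Q y)"
  define N where "N = (R + 2) / 2 * Kb"
  define M where "M = Kb * Ke + Ka + 2 * N * Ke"
  have Ppos: "0 < P y \<and> P y \<le> Kb" if y: "y \<ge> y0" for y
  proof -
    have "P y > 0" using bnz[OF y] epos[OF y] by (simp add: P_def)
    moreover have "\<bar>P y\<bar> \<le> Kb" unfolding P_def using Kb(2) y by blast
    ultimately show ?thesis by simp
  qed
  have Npos: "N > 0" using R Kb by (simp add: N_def)
  have Mpos: "M > 0" using Npos Kb Ka Ke by (simp add: M_def add_pos_pos)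
  have Dbd: "0 \<le> D y \<and> D y \<le> N" if y: "y \<ge> y0" for y
  proof -
    define q where "q = (1 - (rho y)^2) * R + (rho y)^2 + 1"
    have q0: "0 \<le> q" "q \<le> R + 2"
    proof -
      have r1: "(rho y)^2 \<le> 1" using rho1[OF y] .
      have "0 \<le> (1 - (rho y)^2) * R" using r1 R by simp
      moreover have "(1 - (rho y)^2) * R \<le> 1 * R" using R by (intro mult_right_mono) auto
      ultimately show "0 \<le> q" "q \<le> R + 2" using r1 unfolding q_def by (auto simp: power2_eq_square)
    qed
    have Dq: "D y = 1/2 * P y * q" unfolding D_def P_def dd_def d_fun_def q_def by simp
    have "P y * q \<le> Kb * (R + 2)" using Ppos[OF y] q0 by (intro mult_mono) auto
    moreover have "0 \<le> P y * q" using Ppos[OF y] q0 by simp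
    ultimately show ?thesis using Dq by (auto simp: N_def mult.commute)
  qed
  have Bbd: "\<bar>B y\<bar> \<le> M" if y: "y \<ge> y0" for y
  proof -
    have q: "\<bar>Q y\<bar> \<le> Ke" unfolding Q_def using Ke y by blast
    have "\<bar>P y * Q y\<bar> \<le> Kb * Ke" unfolding abs_mult using Ppos[OF y] q by (intro mult_mono) auto
    moreover have "\<bar>2 * D y * Q y\<bar> \<le> 2 * N * Ke" unfolding abs_mult using Dbd[OF y] q
      by (intro mult_mono) auto
    moreover have "\<bar>Aa y\<bar> \<le> Ka" unfolding Aa_def using Ka y by blast
    ultimately show ?thesis unfolding B_def M_def by linarith
  qed
  have ident: "P y / 2 * w2 y = w y * (w y - Ps y) - B y * w1 y + D y * (w1 y)^2 / w y" if y: "y > y0" for y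
  proof -
    have yy: "y \<ge> y0" using y by simp
    have "(b y)^2/(2*e y)*w2 y = w y*(w y - Ps y) - ((b y)^2/e y*(eta1 y/e y) + ta y/e y - 2*(dd y/e y)*(eta1 y/e y))*w1 y + (dd y/e y)*(w1 y)^2/w y"
    proof (rule alg)
      show "0 = 1/2*(b y)^2*u2 y + ta y*u1 y + e y*u y - (u y)^2 - dd y*(u1 y)^2/u y"
        using u_eq yy by (simp add: e_def ta_def dd_def)
      show "Ps y = 1 + (1/2*(b y)^2*eta2 y + ta y*eta1 y)/(e y)^2 - dd y*(eta1 y)^2/(e y)^3"
        by (simp add: Ps_def Psi_def)
    qed (use epos[OF yy] upos[OF yy] in \<open>auto simp: w_def w1_def w2_def\<close>)
    then show ?thesis by (simp add: P_def B_def Q_def Aa_def D_def)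
  qed
  have PsT: "(Ps \<longlongrightarrow> 1) at_top" using A3 by (simp add: Ps_def ta_def dd_def e_def)
  show ?thesis
    unfolding tendsto_iff
  proof (intro allI impI)
    fix \<epsilon> :: real assume ep: "\<epsilon> > 0"
    have "eventually (\<lambda>y. dist (Ps y) 1 < \<epsilon>/2) at_top" using PsT[unfolded tendsto_iff, rule_format, of "\<epsilon>/2"] ep by simp
    then obtain T0 where T0: "\<forall>y\<ge>T0. \<bar>Ps y - 1\<bar> < \<epsilon>/2"
      unfolding eventually_at_top_linorder dist_real_def by blast
    define T where "T = max T0 (y0 + 1)"
    have Ty: "\<And>x. x \<ge> T \<Longrightarrow> x > y0 \<and> x \<ge> y0 \<and> \<bar>Ps x - 1\<bar> < \<epsilon>/2" using T0 by (auto simp: T_def)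
    have up: "\<exists>x0. \<forall>x\<ge>x0. w x < 1 + \<epsilon>"
    proof (rule core[where v=w and dv=w1 and ddv=w2 and T=T and lo=C1 and hi=C2
          and \<kappa>="\<epsilon>/(4*(M+1))" and \<delta>="\<epsilon>/(2*Kb)"])
      show "\<epsilon>/(4*(M+1)) > 0" using ep Mpos by simp
      show "\<epsilon>/(2*Kb) > 0" using ep Kb by simp
      show "\<forall>x\<ge>T. C1 \<le> w x \<and> w x \<le> C2" using wb Ty by simp
      show "\<forall>x\<ge>T. (w has_real_derivative w1 x) (at x)" using dw Ty by simp
      show "\<forall>x\<ge>T. (w1 has_real_derivative w2 x) (at x)" using dw1 Ty by simp
      show "\<forall>x\<ge>T. 1 + \<epsilon> \<le> w x \<longrightarrow> \<bar>w1 x\<bar> \<le> \<epsilon>/(4*(M+1)) \<longrightarrow> \<epsilon>/(2*Kb) \<le> w2 x"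
      proof (intro allI impI)
        fix x assume x: "x \<ge> T" and wx: "1 + \<epsilon> \<le> w x" and w1x: "\<bar>w1 x\<bar> \<le> \<epsilon>/(4*(M+1))"
        have xy: "x > y0" "x \<ge> y0" "\<bar>Ps x - 1\<bar> < \<epsilon>/2" using Ty[OF x] by auto
        have psb: "Ps x < 1 + \<epsilon>/2" "Ps x > 1 - \<epsilon>/2" using xy(3) by arith+
        have h1: "1 * (\<epsilon>/2) \<le> w x * (w x - Ps x)" using wx psb ep by (intro mult_mono) auto
        have h2: "\<bar>B x * w1 x\<bar> \<le> M * (\<epsilon>/(4*(M+1)))" unfolding abs_mult
          using Bbd[OF xy(2)] w1x by (intro mult_mono) auto
        have h3: "M * (\<epsilon>/(4*(M+1))) \<le> \<epsilon>/4" using Mpos ep by (simp add: field_simps)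
        have h4: "D x * (w1 x)^2 / w x \<ge> 0" using Dbd[OF xy(2)] wb xy(2) C(1)
          by (intro divide_nonneg_nonneg mult_nonneg_nonneg) auto
        have key: "P x / 2 * w2 x \<ge> \<epsilon>/4" using ident[OF xy(1)] h1 abs_le_D1[OF h2] h3 h4 by linarith
        have pp: "0 < P x" "P x \<le> Kb" using Ppos[OF xy(2)] by auto
        have w2p: "w2 x > 0"
        proof (rule ccontr)
          assume "\<not> w2 x > 0"
          then have "P x / 2 * w2 x \<le> 0" using pp by (simp add: mult_nonneg_nonpos)
          then show False using key ep by simp
        qed
        have "P x / 2 * w2 x \<le> Kb / 2 * w2 x" using pp w2p by (intro mult_right_mono) auto
        then have "\<epsilon>/4 \<le> Kb / 2 * w2 x" using key by simp
        then show "\<epsilon>/(2*Kb) \<le> w2 x" using Kb(1) by (simp add: field_simps)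
      qed
    qed
    define \<kappa> where "\<kappa> = min 1 (C1*\<epsilon>/(4*(M + N/C1 + 1)))"
    have kp: "\<kappa> > 0" "\<kappa> \<le> 1" "\<kappa> \<le> C1*\<epsilon>/(4*(M + N/C1 + 1))"
    proof -
      have "M + N/C1 + 1 > 0" using Mpos Npos C by (simp add: add_pos_pos)
      then have "C1*\<epsilon>/(4*(M + N/C1 + 1)) > 0" using ep C by simp
      then show "\<kappa> > 0" "\<kappa> \<le> 1" "\<kappa> \<le> C1*\<epsilon>/(4*(M + N/C1 + 1))" by (auto simp: \<kappa>_def)
    qed
    have lo: "\<exists>x0. \<forall>x\<ge>x0. - w x < - (1 - \<epsilon>)"
    proof (rule core[where v="\<lambda>x. - w x" and dv="\<lambda>x. - w1 x" and ddv="\<lambda>x. - w2 x" and T=T and lo="-C2" and hi="-C1"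
          and \<kappa>=\<kappa> and \<delta>="C1*\<epsilon>/(2*Kb)"])
      show "\<kappa> > 0" using kp by simp
      show "C1*\<epsilon>/(2*Kb) > 0" using ep Kb C by simp
      show "\<forall>x\<ge>T. - C2 \<le> - w x \<and> - w x \<le> - C1" using wb Ty by simp
      show "\<forall>x\<ge>T. ((\<lambda>x. - w x) has_real_derivative - w1 x) (at x)" using dw Ty by (simp add: DERIV_minus)
      show "\<forall>x\<ge>T. ((\<lambda>x. - w1 x) has_real_derivative - w2 x) (at x)" using dw1 Ty by (simp add: DERIV_minus)
      show "\<forall>x\<ge>T. - (1 - \<epsilon>) \<le> - w x \<longrightarrow> \<bar>- w1 x\<bar> \<le> \<kappa> \<longrightarrow> C1*\<epsilon>/(2*Kb) \<le> - w2 x"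
      proof (intro allI impI)
        fix x assume x: "x \<ge> T" and wx: "- (1 - \<epsilon>) \<le> - w x" and w1x': "\<bar>- w1 x\<bar> \<le> \<kappa>"
        have w1x: "\<bar>w1 x\<bar> \<le> \<kappa>" using w1x' by simp
        have xy: "x > y0" "x \<ge> y0" "\<bar>Ps x - 1\<bar> < \<epsilon>/2" using Ty[OF x] by auto
        have psb: "Ps x < 1 + \<epsilon>/2" "Ps x > 1 - \<epsilon>/2" using xy(3) by arith+
        have wC: "C1 \<le> w x" using wb xy(2) by blast
        have h1: "C1 * (\<epsilon>/2) \<le> w x * (Ps x - w x)" using wx psb ep wC C by (intro mult_mono) auto
        have h2: "\<bar>B x * w1 x\<bar> \<le> M * \<kappa>" unfolding abs_mult
          using Bbd[OF xy(2)] w1x by (intro mult_mono) auto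
        have sq: "(w1 x)^2 \<le> \<kappa>"
        proof -
          have "(w1 x)^2 = \<bar>w1 x\<bar> * \<bar>w1 x\<bar>" by (simp add: power2_eq_square abs_mult_self_eq)
          also have "\<dots> \<le> \<kappa> * 1" using w1x kp by (intro mult_mono) auto
          finally show ?thesis by simp
        qed
        have "D x * (w1 x)^2 \<le> N * \<kappa>" using Dbd[OF xy(2)] sq by (intro mult_mono) auto
        then have h3: "D x * (w1 x)^2 / w x \<le> N * \<kappa> / C1"
          using Dbd[OF xy(2)] wC C Npos kp by (intro frac_le) auto
        have h4: "M * \<kappa> + N * \<kappa> / C1 \<le> C1*\<epsilon>/4"
        proof -
          have "M * \<kappa> + N * \<kappa> / C1 = \<kappa> * (M + N/C1)" by (simp add: algebra_simps)
          also have "\<dots> \<le> \<kappa> * (M + N/C1 + 1)" using kp by simp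
          also have "\<dots> \<le> C1*\<epsilon>/(4*(M + N/C1 + 1)) * (M + N/C1 + 1)"
            using kp Mpos Npos C by (intro mult_right_mono) auto
          also have "\<dots> = C1*\<epsilon>/4"
          proof -
            have gen: "\<And>S::real. S > 0 \<Longrightarrow> C1*\<epsilon>/(4*S)*S = C1*\<epsilon>/4" by simp
            have "M + N/C1 + 1 > 0" using Mpos Npos C by (simp add: add_pos_pos)
            then show ?thesis by (rule gen)
          qed
          finally show ?thesis .
        qed
        have neg: "P x / 2 * (- w2 x) = - (P x / 2 * w2 x)" by simp
        have rr: "w x * (w x - Ps x) = - (w x * (Ps x - w x))" by (simp add: algebra_simps)
        have key: "P x / 2 * (- w2 x) \<ge> C1*\<epsilon>/4" using ident[OF xy(1)] h1 abs_le_D2[OF h2] h3 h4 neg rr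
          by linarith
        have pp: "0 < P x" "P x \<le> Kb" using Ppos[OF xy(2)] by auto
        have w2p: "- w2 x > 0"
        proof (rule ccontr)
          assume "\<not> - w2 x > 0"
          then have "P x / 2 * (- w2 x) \<le> 0" using pp by (simp add: mult_nonneg_nonpos)
          then show False using key mult_pos_pos[OF C(1) ep] by linarith
        qed
        have "P x / 2 * (- w2 x) \<le> Kb / 2 * (- w2 x)" using pp w2p by (intro mult_right_mono) auto
        then have "C1*\<epsilon>/4 \<le> Kb / 2 * (- w2 x)" using key by simp
        then show "C1*\<epsilon>/(2*Kb) \<le> - w2 x" using Kb(1) by (simp add: field_simps)
      qed
    qed
    obtain x1 where x1: "\<forall>x\<ge>x1. w x < 1 + \<epsilon>" using up by blast
    obtain x2 where x2: "\<forall>x\<ge>x2. - w x < - (1 - \<epsilon>)" using lo by blast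
    have "\<forall>x\<ge>max x1 x2. dist (u x / eta_fun R r lam delta x) 1 < \<epsilon>"
    proof (intro allI impI)
      fix x assume "x \<ge> max x1 x2"
      then have "w x < 1 + \<epsilon>" "- w x < - (1 - \<epsilon>)" using x1 x2 by auto
      then show "dist (u x / eta_fun R r lam delta x) 1 < \<epsilon>"
        by (simp add: w_def e_def dist_real_def abs_less_iff)
    qed
    then show "eventually (\<lambda>x. dist (u x / eta_fun R r lam delta x) 1 < \<epsilon>) at_top"
      unfolding eventually_at_top_linorder by blast
  qed
qed

end
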